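(* Let $p\ge q\ge 1$, real $c_{q+1},\dots,c_p$ (with $c_j=0$ for $j>p$), and \[ r(x) = 1 + \sum_{j=1}^{q}\frac{1}{j!}(-\mathrm{i}x)^j + \sum_{j=q+1}^{p} c_j(-\mathrm{i}x)^j . \] Define $S=(-1)^{q/2}\Big[\big(c_{q+1}-\tfrac{1}{(q+1)!}\big)-\big(c_{q+2}-\tfrac{1}{(q+2)!}\big)\Big]$ if $q$ is even and $S=(-1)^{(q+1)/2}\big(c_{q+1}-\tfrac{1}{(q+1)!}\big)$ if $q$ is odd. If $S<0$, then there exists $\eta_s>0$ such that $|r(x)|<1$ for all real $x$ with $0<x<\pi\eta_s$. If $S>0$, then there exists $\varepsilon>0$ such that $|r(x)|>1$ for all real $x$ with $0<x<\varepsilon$ (i.e. the scheme is unstable for arbitrarily small real $x$). *)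

theory Defs
  imports Complex_Main
begin

definition ceff :: "(nat \<Rightarrow> real) \<Rightarrow> nat \<Rightarrow> nat \<Rightarrow> real" where
  "ceff c p j = (if j \<le> p then c j else 0)"

definition rfun :: "(nat \<Rightarrow> real) \<Rightarrow> nat \<Rightarrow> nat \<Rightarrow> real \<Rightarrow> complex" where
  "rfun c p q x = 1 + (\<Sum>j=1..q. (- \<i> * complex_of_real x) ^ j / of_real (fact j))
                     + (\<Sum>j=q+1..p. complex_of_real (c j) * (- \<i> * complex_of_real x) ^ j)"

definition Sval :: "(nat \<Rightarrow> real) \<Rightarrow> nat \<Rightarrow> nat \<Rightarrow> real" where
  "Sval c p q =
     (if even q then
        (-1) ^ (q div 2) * ((ceff c p (q+1) - 1 / fact (q+1)) - (ceff c p (q+2) - 1 / fact (q+2)))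
      else (-1) ^ ((q+1) div 2) * (ceff c p (q+1) - 1 / fact (q+1)))"

end

theory Submission imports Defs "HOL-Analysis.Analysis" begin

lemma rfun_split:
  assumes "1 \<le> q" "q \<le> p"
  shows "rfun c p q x = (\<Sum>j\<le>q. (- \<i> * complex_of_real x) ^ j / fact j)
      + (\<Sum>j=q+1..p+2. complex_of_real (ceff c p j) * (- \<i> * complex_of_real x) ^ j)"
proof -
  let ?w = "- \<i> * complex_of_real x"
  have 1: "(\<Sum>j\<le>q. ?w ^ j / fact j) = 1 + (\<Sum>j=1..q. ?w ^ j / of_real (fact j))"
    using sum.atLeast_Suc_atMost[of 0 q "\<lambda>j. ?w ^ j / fact j"]
    by (simp add: atMost_atLeast0 of_real_fact)
  have 2: "(\<Sum>j=q+1..p+2. complex_of_real (ceff c p j) * ?w ^ j)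
     = (\<Sum>j=q+1..p. complex_of_real (ceff c p j) * ?w ^ j) + (\<Sum>j=p+1..p+2. complex_of_real (ceff c p j) * ?w ^ j)"
    by (rule sum.ub_add_nat) (use assms in simp)
  have 3: "(\<Sum>j=p+1..p+2. complex_of_real (ceff c p j) * ?w ^ j) = 0"
    by (rule sum.neutral) (auto simp: ceff_def)
  have 4: "(\<Sum>j=q+1..p. complex_of_real (ceff c p j) * ?w ^ j) = (\<Sum>j=q+1..p. complex_of_real (c j) * ?w ^ j)"
    by (rule sum.cong) (auto simp: ceff_def)
  show ?thesis unfolding rfun_def 1 2 3 4 by simp
qed

lemma exp_split:
  assumes "q \<le> p"
  shows "(\<Sum>j\<le>p+2. (w::complex) ^ j / fact j) = (\<Sum>j\<le>q. w ^ j / fact j) + (\<Sum>j=q+1..p+2. w ^ j / fact j)"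
proof -
  have "p + 2 = q + (p + 2 - q)" using assms by simp
  then show ?thesis using sum_up_index_split[of "\<lambda>j. w ^ j / fact j" q "p+2-q"] by simp
qed

lemma E_decomp:
  fixes x :: real and c :: "nat \<Rightarrow> real"
  assumes "1 \<le> q" "q \<le> p"
  defines "w \<equiv> - \<i> * complex_of_real x"
  defines "d \<equiv> \<lambda>j. ceff c p j - 1 / fact j"
  shows "rfun c p q x - exp w = of_real (d (q+1)) * w^(q+1) + of_real (d (q+2)) * w^(q+2)
     + (\<Sum>j=q+3..p+2. of_real (d j) * w ^ j) - (exp w - (\<Sum>j\<le>p+2. w ^ j / fact j))"
proof -
  have A: "rfun c p q x - (\<Sum>j\<le>p+2. w ^ j / fact j) = (\<Sum>j=q+1..p+2. of_real (d j) * w ^ j)"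
    unfolding rfun_split[OF assms(1,2)] exp_split[OF assms(2)] w_def[symmetric]
    by (simp add: d_def sum_subtractf algebra_simps of_real_fact)
  have B: "(\<Sum>j=q+1..p+2. of_real (d j) * w ^ j) = of_real (d (q+1)) * w^(q+1) + (of_real (d (q+2)) * w^(q+2)
     + (\<Sum>j=q+3..p+2. of_real (d j) * w ^ j))"
    using assms sum.atLeast_Suc_atMost[of "q+1" "p+2" "\<lambda>j. of_real (d j) * w ^ j"]
      sum.atLeast_Suc_atMost[of "q+2" "p+2" "\<lambda>j. of_real (d j) * w ^ j"]
    by (simp add: numeral_eq_Suc)
  show ?thesis using A B by (simp add: algebra_simps)
qed

lemma div_ge1_le: "(0::real) \<le> a \<Longrightarrow> 1 \<le> b \<Longrightarrow> a / b \<le> a"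
  using divide_left_mono[of 1 b a] by simp

lemma norm3: "norm (a + b + c) \<le> norm a + norm b + norm (c::'a::real_normed_vector)"
  using norm_triangle_ineq[of "a+b" c] norm_triangle_ineq[of a b] by linarith

lemma pow_le_pow_small:
  fixes x :: real assumes "0 \<le> x" "x \<le> 1" "m \<le> n" shows "x ^ n \<le> x ^ m"
  using power_decreasing[OF assms(3,1,2)] .

lemma core_bound:
  fixes x :: real and c :: "nat \<Rightarrow> real"
  assumes q1: "1 \<le> q" and qp: "q \<le> p" and x0: "0 < x" and x1: "x \<le> 1"
  assumes w_def: "w = - \<i> * complex_of_real x"
  assumes d_def: "d = (\<lambda>j. ceff c p j - 1 / fact j)"
  assumes KT_def: "KT = (\<Sum>j=q+3..p+2. \<bar>d j\<bar>) + 1"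
  assumes KR_def: "KR = 2 * \<bar>d (q+2)\<bar> + \<bar>d (q+1)\<bar> + KT"
  assumes K3_def: "K3 = \<bar>d (q+1)\<bar> + \<bar>d (q+2) - d (q+1)\<bar> + KR"
  shows "\<bar>cmod (rfun c p q x) ^ 2 - 1 - 2 * (d (q+1) * Re (w^(q+1)) + (d (q+2) - d (q+1)) * Re (w^(q+2)))\<bar>
          \<le> (2 * KR + K3^2) * x ^ (q+3)"
proof -
  define D1 where "D1 = d (q+1)"
  define D2 where "D2 = d (q+2)"
  define T where "T = (\<Sum>j=q+3..p+2. of_real (d j) * w ^ j)"
  define R where "R = exp w - (\<Sum>j\<le>p+2. w ^ j / fact j)"
  define G where "G = T - R"
  define A where "A = of_real D1 * w^(q+1) + of_real D2 * w^(q+2)"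
  define E where "E = rfun c p q x - exp w"
  have EAG: "E = A + G"
    unfolding E_def A_def G_def T_def R_def D1_def D2_def w_def d_def
    using E_decomp[OF q1 qp, where x=x and c=c] by simp
  have nw: "norm w = x" using x0 by (simp add: w_def norm_mult)
  have Rew: "Re w = 0" by (simp add: w_def)
  have xq3: "\<And>j. q + 3 \<le> j \<Longrightarrow> x ^ j \<le> x ^ (q+3)"
    using pow_le_pow_small x0 x1 by simp
  have nT: "norm T \<le> (\<Sum>j=q+3..p+2. \<bar>d j\<bar>) * x ^ (q+3)"
  proof -
    have "norm T \<le> (\<Sum>j=q+3..p+2. norm (of_real (d j) * w ^ j))"
      unfolding T_def by (rule norm_sum)
    also have "\<dots> \<le> (\<Sum>j=q+3..p+2. \<bar>d j\<bar> * x ^ (q+3))"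
      by (rule sum_mono) (auto simp: norm_mult norm_power nw intro!: mult_left_mono xq3)
    finally show ?thesis by (simp only: sum_distrib_right)
  qed
  have nR: "norm R \<le> x ^ (q+3)"
  proof -
    have "norm R \<le> exp \<bar>Re w\<bar> * (norm w) ^ (Suc (p+2)) / fact (p+2)"
      unfolding R_def by (rule Taylor_exp)
    also have "\<dots> = x ^ (Suc (p+2)) / fact (p+2)" by (simp add: Rew nw)
    also have "\<dots> \<le> x ^ (Suc (p+2))"
      using x0 by (intro div_ge1_le fact_ge_1) simp
    also have "\<dots> \<le> x ^ (q+3)" using qp by (intro xq3) simp
    finally show ?thesis .
  qed
  have nG: "norm G \<le> KT * x ^ (q+3)"
  proof -
    have "norm G \<le> norm T + norm R" unfolding G_def by (rule norm_triangle_ineq4)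
    also have "\<dots> \<le> KT * x ^ (q+3)" using nT nR by (simp add: KT_def algebra_simps)
    finally show ?thesis .
  qed
  have KTpos: "0 \<le> KT" unfolding KT_def by (auto intro: sum_nonneg)
  define v where "v = - w"
  define H where "H = exp v - (1 + v)"
  have nH: "norm H \<le> x ^ 2"
  proof -
    have "norm H \<le> exp \<bar>Re v\<bar> * (norm v) ^ (Suc 1) / fact 1"
      using Taylor_exp[of v 1] unfolding H_def by (simp add: numeral_eq_Suc)
    also have "\<dots> = x ^ 2" by (simp add: v_def Rew nw power2_eq_square)
    finally show ?thesis .
  qed
  define F where "F = exp v * E"
  have rF: "rfun c p q x = exp w * (1 + F)"
    unfolding F_def E_def v_def by (simp add: algebra_simps exp_minus_inverse)
  have cr: "cmod (rfun c p q x) = cmod (1 + F)"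
    unfolding rF norm_mult by (simp add: norm_exp_eq_Re Rew)
  define Rest where "Rest = - of_real D2 * w^(q+3) + H * A + exp v * G"
  have FRest: "F = of_real D1 * w^(q+1) + of_real (D2 - D1) * w^(q+2) + Rest"
  proof -
  have F1: "F = (1 - w + H) * A + exp v * G" unfolding F_def EAG H_def v_def by (simp add: algebra_simps)
    have p1: "w^(q+1) = w^q*w" and p2: "w^(q+2) = w^q*w*w" and p3: "w^(q+3) = w^q*w*w*w"
      by (simp_all add: power_add numeral_eq_Suc)
    show ?thesis unfolding Rest_def F1 A_def p1 p2 p3 of_real_diff by algebra
  qed
  have nA: "norm A \<le> \<bar>D1\<bar> * x^(q+1) + \<bar>D2\<bar> * x^(q+2)"
    unfolding A_def using norm_triangle_ineq[of "of_real D1 * w^(q+1)" "of_real D2 * w^(q+2)"]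
    by (simp add: norm_mult norm_power nw)
  have nev: "norm (exp v) = 1" by (simp add: norm_exp_eq_Re v_def Rew)
  have nRest: "norm Rest \<le> KR * x^(q+3)"
  proof -
    have "norm Rest \<le> norm (- of_real D2 * w^(q+3)) + norm (H * A) + norm (exp v * G)"
      unfolding Rest_def by (rule norm3)
    also have "\<dots> \<le> \<bar>D2\<bar> * x^(q+3) + x^2 * (\<bar>D1\<bar> * x^(q+1) + \<bar>D2\<bar> * x^(q+2)) + KT * x ^ (q+3)"
    proof -
      have h1: "norm (H * A) \<le> x^2 * (\<bar>D1\<bar> * x^(q+1) + \<bar>D2\<bar> * x^(q+2))"
        unfolding norm_mult by (rule mult_mono[OF nH nA]) auto
      have h2: "norm (exp v * G) \<le> KT * x^(q+3)" unfolding norm_mult nev using nG by simp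
      have h3: "norm (- of_real D2 * w^(q+3)) = \<bar>D2\<bar> * x^(q+3)" by (simp add: norm_mult norm_power nw)
      show ?thesis using h1 h2 h3 by linarith
    qed
    also have "\<dots> = \<bar>D2\<bar> * x^(q+3) + \<bar>D1\<bar> * x^(q+3) + \<bar>D2\<bar> * x^(q+4) + KT * x ^ (q+3)"
      by (simp add: algebra_simps power_add[symmetric] numeral_eq_Suc)
    also have "\<dots> \<le> \<bar>D2\<bar> * x^(q+3) + \<bar>D1\<bar> * x^(q+3) + \<bar>D2\<bar> * x^(q+3) + KT * x ^ (q+3)"
      using xq3[of "q+4"] KTpos by (intro add_mono mult_left_mono) auto
    finally show ?thesis by (simp add: KR_def D1_def D2_def algebra_simps)
  qed
  have KRpos: "0 \<le> KR" unfolding KR_def KT_def by (auto intro: sum_nonneg)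
  have nF: "norm F \<le> K3 * x^(q+1)"
  proof -
    have "norm F \<le> \<bar>D1\<bar> * x^(q+1) + \<bar>D2 - D1\<bar> * x^(q+2) + KR * x^(q+3)"
      using nRest norm3[of "of_real D1 * w^(q+1)" "of_real (D2 - D1) * w^(q+2)" Rest]
      unfolding FRest norm_mult norm_power norm_of_real nw by linarith
    also have "\<dots> \<le> \<bar>D1\<bar> * x^(q+1) + \<bar>D2 - D1\<bar> * x^(q+1) + KR * x^(q+1)"
      using pow_le_pow_small[of x "q+1" "q+2"] pow_le_pow_small[of x "q+1" "q+3"] x0 x1 KRpos
      by (intro add_mono mult_left_mono) auto
    finally show ?thesis by (simp add: K3_def D1_def D2_def algebra_simps)
  qed
  have nF2: "norm F ^ 2 \<le> K3^2 * x^(q+3)"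
  proof -
    have "norm F ^ 2 \<le> (K3 * x^(q+1))^2" by (rule power_mono[OF nF]) simp
    also have "\<dots> = K3^2 * (x^(q+1))^2" by (simp add: power_mult_distrib)
    also have "\<dots> = K3^2 * x^(2*q+2)"
    proof -
      have "(x^(q+1))^2 = x^(2*q+2)" unfolding power_mult[symmetric] by (simp add: algebra_simps)
      then show ?thesis by simp
    qed
    also have "\<dots> \<le> K3^2 * x^(q+3)" using q1 by (intro mult_left_mono xq3) auto
    finally show ?thesis .
  qed
  have c2: "cmod (1 + F) ^ 2 = 1 + 2 * Re F + norm F ^ 2"
    by (simp only: cmod_power2) (simp add: power2_eq_square algebra_simps)
  have ReF: "Re F = D1 * Re (w^(q+1)) + (D2 - D1) * Re (w^(q+2)) + Re Rest"
    unfolding FRest by simp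
  have "\<bar>cmod (rfun c p q x) ^ 2 - 1 - 2 * (D1 * Re (w^(q+1)) + (D2 - D1) * Re (w^(q+2)))\<bar>
      = \<bar>2 * Re Rest + norm F ^ 2\<bar>" unfolding cr c2 ReF by (simp add: algebra_simps)
  also have "\<dots> \<le> 2 * norm Rest + norm F ^ 2" using abs_Re_le_cmod[of Rest] zero_le_power2[of "cmod F"] by linarith
  also have "\<dots> \<le> (2 * KR + K3^2) * x ^ (q+3)" using nRest nF2 by (simp add: algebra_simps)
  finally show ?thesis by (simp add: D1_def D2_def)
qed

lemma Re_mi_pow_even: "Re ((- \<i>) ^ (2*n)) = (-1) ^ n"
  by (simp add: power_mult)

lemma Re_mi_pow_odd: "Re ((- \<i>) ^ (2*n+1)) = 0"
  by (simp add: power_mult)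

lemma Re_w_pow: "Re ((- \<i> * complex_of_real x) ^ k) = Re ((- \<i>) ^ k) * x ^ k"
proof -
  have "(- \<i> * complex_of_real x) ^ k = (- \<i>) ^ k * complex_of_real (x ^ k)"
    by (simp only: power_mult_distrib of_real_power)
  then show ?thesis by simp
qed

lemma sign_from_bound:
  fixes g :: "real \<Rightarrow> real" and S K :: real and m :: nat
  assumes K: "0 \<le> K" and b: "\<And>x. 0 < x \<Longrightarrow> x \<le> 1 \<Longrightarrow> \<bar>g x - 2 * S * x ^ m\<bar> \<le> K * x ^ (m+1)"
  shows "(S < 0 \<longrightarrow> (\<exists>e>0. \<forall>x. 0 < x \<and> x < e \<longrightarrow> g x < 0))
       \<and> (S > 0 \<longrightarrow> (\<exists>e>0. \<forall>x. 0 < x \<and> x < e \<longrightarrow> g x > 0))"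
proof (intro conjI impI)
  assume S: "S < 0"
  define e where "e = min 1 (- S / (K + 1))"
  have e0: "e > 0" using S K by (simp add: e_def divide_neg_pos)
  show "\<exists>e>0. \<forall>x. 0 < x \<and> x < e \<longrightarrow> g x < 0"
  proof (intro exI[of _ e] conjI allI impI e0)
    fix x assume x: "0 < x \<and> x < e"
    have x1: "x \<le> 1" using x by (simp add: e_def)
    have dv: "x < (- S) / (K + 1)" using x unfolding e_def by linarith
    have Kp: "0 < K + 1" using K by linarith
    have "x * (K + 1) < - S" using iffD1[OF pos_less_divide_eq[OF Kp] dv] .
    hence "K * x < - S" using x by (simp add: algebra_simps)
    hence neg: "2 * S + K * x < 0" using S by linarith
    have xm: "0 < x ^ m" using x by simp
    have "g x \<le> 2 * S * x ^ m + K * x ^ (m+1)" using b[of x] x x1 by linarith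
    also have "\<dots> = x ^ m * (2 * S + K * x)" by (simp add: algebra_simps)
    also have "\<dots> < 0" using xm neg by (simp add: mult_pos_neg)
    finally show "g x < 0" .
  qed
next
  assume S: "S > 0"
  define e where "e = min 1 (S / (K + 1))"
  have e0: "e > 0" using S K by (simp add: e_def)
  show "\<exists>e>0. \<forall>x. 0 < x \<and> x < e \<longrightarrow> g x > 0"
  proof (intro exI[of _ e] conjI allI impI e0)
    fix x assume x: "0 < x \<and> x < e"
    have x1: "x \<le> 1" using x by (simp add: e_def)
    have dv: "x < (S) / (K + 1)" using x unfolding e_def by linarith
    have Kp: "0 < K + 1" using K by linarith
    have "x * (K + 1) < S" using iffD1[OF pos_less_divide_eq[OF Kp] dv] .
    hence "K * x < S" using x by (simp add: algebra_simps)
    hence pos: "2 * S - K * x > 0" using S by linarith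
    have xm: "0 < x ^ m" using x by simp
    have "0 < x ^ m * (2 * S - K * x)" using xm pos by simp
    also have "\<dots> = 2 * S * x ^ m - K * x ^ (m+1)" by (simp add: algebra_simps)
    also have "\<dots> \<le> g x" using b[of x] x x1 by linarith
    finally show "g x > 0" .
  qed
qed


lemma bound_S:
  fixes c :: "nat \<Rightarrow> real"
  assumes q1: "1 \<le> q" and qp: "q \<le> p"
  shows "\<exists>K m. 0 \<le> K \<and> (\<forall>x. 0 < x \<longrightarrow> x \<le> 1 \<longrightarrow>
     \<bar>cmod (rfun c p q x) ^ 2 - 1 - 2 * Sval c p q * x ^ m\<bar> \<le> K * x ^ (m+1))"
proof -
  define d where "d = (\<lambda>j. ceff c p j - 1 / fact j)"
  define KT where "KT = (\<Sum>j=q+3..p+2. \<bar>d j\<bar>) + 1"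
  define KR where "KR = 2 * \<bar>d (q+2)\<bar> + \<bar>d (q+1)\<bar> + KT"
  define K3 where "K3 = \<bar>d (q+1)\<bar> + \<bar>d (q+2) - d (q+1)\<bar> + KR"
  define K0 where "K0 = 2 * KR + K3^2"
  have KT0: "0 \<le> KT" unfolding KT_def by (auto intro: sum_nonneg)
  have K00: "0 \<le> K0" unfolding K0_def KR_def using KT0 by simp
  have cb: "\<And>x. 0 < x \<Longrightarrow> x \<le> 1 \<Longrightarrow>
     \<bar>cmod (rfun c p q x) ^ 2 - 1 - 2 * (d (q+1) * (Re ((- \<i>) ^ (q+1)) * x^(q+1))
        + (d (q+2) - d (q+1)) * (Re ((- \<i>) ^ (q+2)) * x^(q+2)))\<bar> \<le> K0 * x ^ (q+3)"
    using core_bound[OF q1 qp _ _ refl d_def KT_def KR_def K3_def] unfolding K0_def Re_w_pow by blast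
  show ?thesis
  proof (cases "even q")
    case True
    then obtain n where n: "q = 2*n" by blast
    have r1: "Re ((- \<i>) ^ (q+1)) = 0" using Re_mi_pow_odd[of n] n by simp
    have r2: "Re ((- \<i>) ^ (q+2)) = (-1)^(n+1)" using Re_mi_pow_even[of "n+1"] n by (simp add: algebra_simps)
    have S: "Sval c p q = (-1)^n * (d (q+1) - d (q+2))"
      unfolding Sval_def d_def using True n by simp
    show ?thesis
    proof (intro exI conjI allI impI)
      fix x :: real assume x0: "0 < x" and x1: "x \<le> 1"
      have e: "2 * (d (q+1) * (Re ((- \<i>) ^ (q+1)) * x^(q+1))
        + (d (q+2) - d (q+1)) * (Re ((- \<i>) ^ (q+2)) * x^(q+2))) = 2 * Sval c p q * x ^ (q+2)"
        unfolding r1 r2 S by (simp add: algebra_simps)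
      have h: "x ^ (q+2+1) = x^(q+3)" by (simp add: add.assoc numeral_Bit1)
      show "\<bar>cmod (rfun c p q x) ^ 2 - 1 - 2 * Sval c p q * x ^ (q+2)\<bar> \<le> K0 * x ^ (q+2+1)"
        using cb[OF x0 x1] unfolding e h .
    qed (rule K00)
  next
    case False
    then obtain n where n: "q = 2*n+1" using oddE by blast
    have r1: "Re ((- \<i>) ^ (q+1)) = (-1)^(n+1)" using Re_mi_pow_even[of "n+1"] n by (simp add: algebra_simps)
    have r2: "Re ((- \<i>) ^ (q+2)) = 0" using Re_mi_pow_odd[of "n+1"] n by (simp add: algebra_simps)
    have S: "Sval c p q = (-1)^(n+1) * d (q+1)"
      unfolding Sval_def d_def using False n by simp
    show ?thesis
    proof (intro exI conjI allI impI)
      fix x :: real assume x0: "0 < x" and x1: "x \<le> 1"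
      have e: "2 * (d (q+1) * (Re ((- \<i>) ^ (q+1)) * x^(q+1))
        + (d (q+2) - d (q+1)) * (Re ((- \<i>) ^ (q+2)) * x^(q+2))) = 2 * Sval c p q * x ^ (q+1)"
        unfolding r1 r2 S by (simp add: algebra_simps)
      have "K0 * x ^ (q+3) \<le> K0 * x ^ (q+1+1)"
        using K00 x0 x1 by (intro mult_left_mono pow_le_pow_small) auto
      then show "\<bar>cmod (rfun c p q x) ^ 2 - 1 - 2 * Sval c p q * x ^ (q+1)\<bar> \<le> K0 * x ^ (q+1+1)"
        using cb[OF x0 x1] unfolding e by linarith
    qed (rule K00)
  qed
qed

theorem mainTheorem2:
  fixes p q :: nat and c :: "nat \<Rightarrow> real"
  assumes "1 \<le> q" and "q \<le> p"
  shows "(Sval c p q < 0 \<longrightarrow>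
            (\<exists>\<eta>>0. \<forall>x::real. 0 < x \<and> x < pi * \<eta> \<longrightarrow> cmod (rfun c p q x) < 1))
       \<and> (Sval c p q > 0 \<longrightarrow>
            (\<exists>\<epsilon>>0. \<forall>x::real. 0 < x \<and> x < \<epsilon> \<longrightarrow> cmod (rfun c p q x) > 1))"
proof -
  obtain K m where K: "0 \<le> K" and b: "\<And>x. 0 < x \<Longrightarrow> x \<le> 1 \<Longrightarrow>
     \<bar>cmod (rfun c p q x) ^ 2 - 1 - 2 * Sval c p q * x ^ m\<bar> \<le> K * x ^ (m+1)"
    using bound_S[OF assms] by blast
  have sb: "(Sval c p q < 0 \<longrightarrow> (\<exists>e>0. \<forall>x. 0 < x \<and> x < e \<longrightarrow> cmod (rfun c p q x) ^ 2 - 1 < 0))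
       \<and> (Sval c p q > 0 \<longrightarrow> (\<exists>e>0. \<forall>x. 0 < x \<and> x < e \<longrightarrow> cmod (rfun c p q x) ^ 2 - 1 > 0))"
    by (rule sign_from_bound[OF K b])
  have lt: "\<And>x. cmod (rfun c p q x) ^ 2 - 1 < 0 \<Longrightarrow> cmod (rfun c p q x) < 1"
  proof -
    fix x assume a: "cmod (rfun c p q x) ^ 2 - 1 < 0"
    show "cmod (rfun c p q x) < 1"
    proof (rule ccontr)
      assume "\<not> cmod (rfun c p q x) < 1"
      then have "1 \<le> cmod (rfun c p q x) ^ 2" by (intro one_le_power) simp
      then show False using a by simp
    qed
  qed
  have gt: "\<And>x. cmod (rfun c p q x) ^ 2 - 1 > 0 \<Longrightarrow> cmod (rfun c p q x) > 1"
  proof -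
    fix x assume a: "cmod (rfun c p q x) ^ 2 - 1 > 0"
    show "cmod (rfun c p q x) > 1"
    proof (rule ccontr)
      assume "\<not> cmod (rfun c p q x) > 1"
      then have "cmod (rfun c p q x) ^ 2 \<le> 1" by (intro power_le_one) simp_all
      then show False using a by simp
    qed
  qed
  show ?thesis
  proof (intro conjI impI)
    assume S: "Sval c p q < 0"
    then obtain e where e: "e > 0" "\<And>x. 0 < x \<and> x < e \<Longrightarrow> cmod (rfun c p q x) ^ 2 - 1 < 0"
      using sb by blast
    show "\<exists>\<eta>>0. \<forall>x::real. 0 < x \<and> x < pi * \<eta> \<longrightarrow> cmod (rfun c p q x) < 1"
    proof (intro exI[of _ "e / pi"] conjI allI impI)
      show "e / pi > 0" using e(1) pi_gt_zero by simp
      fix x :: real assume x: "0 < x \<and> x < pi * (e / pi)"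
      have "pi * (e / pi) = e" using pi_gt_zero by simp
      then show "cmod (rfun c p q x) < 1" using x e(2) lt by auto
    qed
  next
    assume S: "Sval c p q > 0"
    then obtain e where e: "e > 0" "\<And>x. 0 < x \<and> x < e \<Longrightarrow> cmod (rfun c p q x) ^ 2 - 1 > 0"
      using sb by blast
    show "\<exists>\<epsilon>>0. \<forall>x::real. 0 < x \<and> x < \<epsilon> \<longrightarrow> cmod (rfun c p q x) > 1"
      using e gt by blast
  qed
qed

end
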